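(* Let $Y$ be an $\mathrm{OA}(N,k,2,t)$ with symbols from $\{-1,1\}$ and strength $t\ge 1$, and let $X$ be an $N\times k$ array with entries in $\{-1,1\}$. Then $X$ is OD-equivalent to $Y$ if and only if there exists $g\in G(k)^{\rm OD}$ such that the multiset of rows of $X$ equals the multiset of rows of $g(Y)$. Moreover, if $X$ is OD-equivalent to $Y$, then $X$ is an $\mathrm{OA}(N,k,2,2\lfloor t/2\rfloor)$.
   Context: An $\mathrm{OA}(N,k,s,t)$ with $t\in\{0,\dots,k\}$ is an $N\times k$ array over an $s$-element symbol set such that in every $N\times t$ subarray each of the $s^t$ possible $t$-tuples appears exactly $N/s^t$ times as a row. Two $N\times k$ arrays $Y_1,Y_2$ over $\{-1,1\}$ are Hadamard equivalent if $Y_2$ is obtained from $Y_1$ by a sequence of signed permutations (permutations possibly followed by sign changes) of rows or columns, i.e. $Y_2=P_1D_1Y_1D_2P_2$ for permutation matrices $P_1,P_2$ and diagonal $\pm1$ matrices $D_1,D_2$. $X_1,X_2$ are OD-equivalent if $[\mathbf{1},X_1]$ and $[\mathbf{1},X_2]$ are Hadamard equivalent. $G(k)^{\rm OD}$ is the group of permutations of $\{-1,1\}^k$ generated by coordinate permutations, sign changes of single coordinates, and $R_i(z_1,\dots,z_k)=(z_1z_i,\dots,z_{i-1}z_i,z_i,z_{i+1}z_i,\dots,z_kz_i)$ for $i=1,\dots,k$; it acts on arrays row by row. *)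

theory Defs
  imports Complex_Main "HOL-Combinatorics.Permutations" "HOL-Library.Multiset"
begin

text \<open>An N x k array over {-1,1} is a function  A :: nat => nat => int ;
  only the entries A i j with i < N and j < k are relevant.\<close>

definition pm_array :: "nat \<Rightarrow> nat \<Rightarrow> (nat \<Rightarrow> nat \<Rightarrow> int) \<Rightarrow> bool" where
  "pm_array N k A \<longleftrightarrow> (\<forall>i<N. \<forall>j<k. A i j \<in> {-1, 1})"

definition is_OA :: "nat \<Rightarrow> nat \<Rightarrow> nat \<Rightarrow> (nat \<Rightarrow> nat \<Rightarrow> int) \<Rightarrow> bool" where
  "is_OA N k t A \<longleftrightarrow> pm_array N k A \<and> t \<le> k \<and>
     (\<forall>T. T \<subseteq> {..<k} \<longrightarrow> card T = t \<longrightarrow>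
        (\<forall>v::nat \<Rightarrow> int. v ` T \<subseteq> {-1, 1} \<longrightarrow>
           (of_nat (card {i. i < N \<and> (\<forall>j\<in>T. A i j = v j)}) :: rat) = of_nat N / 2 ^ t))"

definition hadamard_equiv :: "nat \<Rightarrow> nat \<Rightarrow> (nat \<Rightarrow> nat \<Rightarrow> int) \<Rightarrow> (nat \<Rightarrow> nat \<Rightarrow> int) \<Rightarrow> bool" where
  "hadamard_equiv N m Y1 Y2 \<longleftrightarrow>
     (\<exists>\<sigma> \<tau> (d1::nat \<Rightarrow> int) (d2::nat \<Rightarrow> int).
        \<sigma> permutes {..<N} \<and> \<tau> permutes {..<m} \<and>
        (\<forall>i<N. d1 i \<in> {-1, 1}) \<and> (\<forall>j<m. d2 j \<in> {-1, 1}) \<and>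
        (\<forall>i<N. \<forall>j<m. Y2 i j = d1 i * d2 j * Y1 (\<sigma> i) (\<tau> j)))"

definition one_col :: "(nat \<Rightarrow> nat \<Rightarrow> int) \<Rightarrow> nat \<Rightarrow> nat \<Rightarrow> int" where
  "one_col X i j = (if j = 0 then 1 else X i (j - 1))"

definition OD_equiv :: "nat \<Rightarrow> nat \<Rightarrow> (nat \<Rightarrow> nat \<Rightarrow> int) \<Rightarrow> (nat \<Rightarrow> nat \<Rightarrow> int) \<Rightarrow> bool" where
  "OD_equiv N k X1 X2 \<longleftrightarrow> hadamard_equiv N (Suc k) (one_col X1) (one_col X2)"

text \<open>Points of {-1,1}^k are represented as int lists of length k.\<close>
definition coord_perm :: "nat \<Rightarrow> (nat \<Rightarrow> nat) \<Rightarrow> int list \<Rightarrow> int list" where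
  "coord_perm k \<pi> z = map (\<lambda>j. z ! \<pi> j) [0..<k]"

definition sign_change :: "nat \<Rightarrow> int list \<Rightarrow> int list" where
  "sign_change i z = z[i := - (z ! i)]"

definition R_map :: "nat \<Rightarrow> nat \<Rightarrow> int list \<Rightarrow> int list" where
  "R_map k i z = map (\<lambda>j. if j = i then z ! i else z ! j * z ! i) [0..<k]"

inductive OD_gen :: "nat \<Rightarrow> (int list \<Rightarrow> int list) \<Rightarrow> bool" for k where
  "\<pi> permutes {..<k} \<Longrightarrow> OD_gen k (coord_perm k \<pi>)"
| "i < k \<Longrightarrow> OD_gen k (sign_change i)"
| "i < k \<Longrightarrow> OD_gen k (R_map k i)"

text \<open>All generators are bijections of
  the finite set {-1,1}^k whose inverses are again generators (or products of them), so the
  generated group equals the closure of the identity under composition with generators.\<close>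
inductive G_OD :: "nat \<Rightarrow> (int list \<Rightarrow> int list) \<Rightarrow> bool" for k where
  G_OD_id: "G_OD k id"
| G_OD_step: "OD_gen k h \<Longrightarrow> G_OD k g \<Longrightarrow> G_OD k (h \<circ> g)"

definition arr_row :: "nat \<Rightarrow> (nat \<Rightarrow> nat \<Rightarrow> int) \<Rightarrow> nat \<Rightarrow> int list" where
  "arr_row k A i = map (A i) [0..<k]"

definition rows_mset :: "nat \<Rightarrow> nat \<Rightarrow> (nat \<Rightarrow> nat \<Rightarrow> int) \<Rightarrow> int list multiset" where
  "rows_mset N k A = mset (map (arr_row k A) [0..<N])"

definition rows_mset_act :: "nat \<Rightarrow> nat \<Rightarrow> (int list \<Rightarrow> int list) \<Rightarrow> (nat \<Rightarrow> nat \<Rightarrow> int) \<Rightarrow> int list multiset" where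
  "rows_mset_act N k g A = mset (map (\<lambda>i. g (arr_row k A i)) [0..<N])"

end

theory Submission
  imports Defs
begin



lemma pm_cases: "(x::int) \<in> {-1,1} \<Longrightarrow> x = -1 \<or> x = 1" by auto

lemma arith1:
  fixes d p b q r :: int
  assumes "d \<in> {-1,1}" "p \<in> {-1,1}" "b \<in> {-1,1}" "q \<in> {-1,1}" "r \<in> {-1,1}" "d*p*b = 1"
  shows "d*q*r = p*q*(b*r)"
  using assms by (auto)

lemma arith2:
  fixes a b u :: int
  assumes "a \<in> {-1,1}" "b \<in> {-1,1}"
  shows "a*b = u \<longleftrightarrow> (a = 1 \<and> b = u) \<or> (a = -1 \<and> b = -u)"
  using assms by auto

lemma arith3:
  fixes a b u :: int
  assumes "a \<in> {-1,1}" "b \<in> {-1,1}" "a = v"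
  shows "a*b = u \<longleftrightarrow> b = v*u"
  using assms by auto

lemma card_perm:
  assumes "\<sigma> permutes {..<N}"
  shows "card {i. i<N \<and> P (\<sigma> i)} = card {i. i<N \<and> P i}"
proof -
  have "\<sigma> ` {i. i<N \<and> P (\<sigma> i)} = {i. i<N \<and> P i}"
  proof
    show "\<sigma> ` {i. i<N \<and> P (\<sigma> i)} \<subseteq> {i. i<N \<and> P i}"
      using permutes_in_image[OF assms] by auto
    show "{i. i<N \<and> P i} \<subseteq> \<sigma> ` {i. i<N \<and> P (\<sigma> i)}"
    proof
      fix i assume "i \<in> {i. i<N \<and> P i}"
      then show "i \<in> \<sigma> ` {i. i<N \<and> P (\<sigma> i)}"
        using permutes_inverses[OF assms] permutes_in_image[OF assms, of "inv \<sigma> i"]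
        by (auto intro!: image_eqI[where x="inv \<sigma> i"])
    qed
  qed
  moreover have "inj_on \<sigma> {i. i<N \<and> P (\<sigma> i)}"
    using permutes_inj[OF assms] by (auto intro: inj_on_subset)
  ultimately show ?thesis by (metis card_image)
qed

lemma mset_perm:
  assumes "\<sigma> permutes {..<N}"
  shows "mset (map (\<lambda>i. f (\<sigma> i)) [0..<N]) = mset (map f [0..<N])"
proof -
  have "mset (map \<sigma> [0..<N]) = mset [0..<N]"
  proof (rule iffD1[OF set_eq_iff_mset_eq_distinct])
    show "distinct (map \<sigma> [0..<N])"
      using permutes_inj[OF assms] by (simp add: distinct_map) (metis inj_on_subset subset_UNIV)
    show "distinct [0..<N]" by simp
    show "set (map \<sigma> [0..<N]) = set [0..<N]"
      using permutes_image[OF assms] by (simp add: atLeast0LessThan)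
  qed
  then have "image_mset f (mset (map \<sigma> [0..<N])) = image_mset f (mset [0..<N])" by simp
  then show ?thesis by (simp add: image_mset.compositionality o_def)
qed

lemma had_sym:
  assumes "hadamard_equiv N m A B"
  shows "hadamard_equiv N m B A"
proof -
  obtain \<sigma> \<tau> d1 d2 where h: "\<sigma> permutes {..<N}" "\<tau> permutes {..<m}"
    "\<forall>i<N. d1 i \<in> {-1, 1::int}" "\<forall>j<m. d2 j \<in> {-1, 1::int}"
    "\<forall>i<N. \<forall>j<m. B i j = d1 i * d2 j * A (\<sigma> i) (\<tau> j)"
    using assms unfolding hadamard_equiv_def by blast
  have s: "inv \<sigma> permutes {..<N}" "inv \<tau> permutes {..<m}" using h permutes_inv by auto
  show ?thesis unfolding hadamard_equiv_def
  proof (intro exI conjI allI impI)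
    show "inv \<sigma> permutes {..<N}" "inv \<tau> permutes {..<m}" by fact+
    fix i assume i: "i < N"
    have ii: "inv \<sigma> i < N" using permutes_in_image[OF s(1)] i by auto
    then show "d1 (inv \<sigma> i) \<in> {-1,1}" using h by auto
    fix j assume j: "j < m"
    have jj: "inv \<tau> j < m" using permutes_in_image[OF s(2)] j by auto
    have "B (inv \<sigma> i) (inv \<tau> j) = d1 (inv \<sigma> i) * d2 (inv \<tau> j) * A i j"
      using h(5) ii jj permutes_inverses[OF h(1)] permutes_inverses[OF h(2)] by auto
    moreover have "d1 (inv \<sigma> i) \<in> {-1,1}" "d2 (inv \<tau> j) \<in> {-1,1}" using h ii jj by auto
    ultimately show "A i j = d1 (inv \<sigma> i) * d2 (inv \<tau> j) * B (inv \<sigma> i) (inv \<tau> j)"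
      by auto
  next
    fix j assume j: "j < m"
    have jj: "inv \<tau> j < m" using permutes_in_image[OF s(2)] j by auto
    then show "d2 (inv \<tau> j) \<in> {-1,1}" using h by auto
  qed
qed




lemma oa_mono_aux:
  assumes oa: "is_OA N k t Y"
  shows "t - card T = d \<Longrightarrow> T \<subseteq> {..<k} \<Longrightarrow> card T \<le> t \<Longrightarrow> (\<forall>j\<in>T. v j \<in> {-1,1}) \<Longrightarrow>
    (of_nat (card {i. i<N \<and> (\<forall>j\<in>T. Y i j = v j)}) :: rat) = of_nat N / 2 ^ card T"
proof (induction d arbitrary: T v)
  case 0
  then have "card T = t" by auto
  moreover have "v ` T \<subseteq> {-1,1}" using 0 by auto
  ultimately show ?case using oa 0(2) unfolding is_OA_def by blast
next
  case (Suc d)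
  have fin: "finite T" using Suc.prems(2) finite_subset by blast
  have tk: "t \<le> k" using oa unfolding is_OA_def by auto
  have "card T < card {..<k}" using Suc.prems tk by auto
  then obtain x where x: "x < k" "x \<notin> T" using Suc.prems(2)
    by (metis lessThan_iff psubsetI psubset_card_mono finite_lessThan subsetI subset_antisym
        card_mono nat_less_le)
  have pm: "\<forall>i<N. Y i x \<in> {-1,1}" using oa x unfolding is_OA_def pm_array_def by auto
  let ?A = "\<lambda>s::int. {i. i<N \<and> (\<forall>j\<in>insert x T. Y i j = (v(x:=s)) j)}"
  have eq: "{i. i<N \<and> (\<forall>j\<in>T. Y i j = v j)} = ?A 1 \<union> ?A (-1)"
  proof (rule set_eqI)
    fix i show "i \<in> {i. i<N \<and> (\<forall>j\<in>T. Y i j = v j)} \<longleftrightarrow> i \<in> ?A 1 \<union> ?A (-1)"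
      using pm x(2) by (cases "i < N"; cases "Y i x = 1") (auto simp: fun_upd_apply; metis)+
  qed
  have disj: "?A 1 \<inter> ?A (-1) = {}" by auto
  have c1: "card (insert x T) = Suc (card T)" using fin x by simp
  have ih: "(of_nat (card (?A s)) :: rat) = of_nat N / 2 ^ Suc (card T)" if "s \<in> {-1,1}" for s
    using Suc.IH[of "insert x T" "v(x:=s)"] Suc.prems c1 x that by auto
  have "card {i. i<N \<and> (\<forall>j\<in>T. Y i j = v j)} = card (?A 1) + card (?A (-1))"
    unfolding eq by (rule card_Un_disjoint) (use disj in auto)
  then show ?case using ih[of 1] ih[of "-1"] by simp
qed

lemma oa_mono:
  assumes "is_OA N k t Y" "T \<subseteq> {..<k}" "card T \<le> t" "\<forall>j\<in>T. v j \<in> {-1,1}"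
  shows "(of_nat (card {i. i<N \<and> (\<forall>j\<in>T. Y i j = v j)}) :: rat) = of_nat N / 2 ^ card T"
  using oa_mono_aux[OF assms(1) refl] assms by blast

lemma oa_inj:
  assumes "is_OA N k t Y" "finite T" "inj_on \<rho> T" "\<forall>j\<in>T. \<rho> j < k" "card T \<le> t"
    "\<forall>j\<in>T. u j \<in> {-1,1}"
  shows "(of_nat (card {i. i<N \<and> (\<forall>j\<in>T. Y i (\<rho> j) = u j)}) :: rat) = of_nat N / 2 ^ card T"
proof -
  let ?v = "\<lambda>m. u (the_inv_into T \<rho> m)"
  have e: "{i. i<N \<and> (\<forall>j\<in>T. Y i (\<rho> j) = u j)} = {i. i<N \<and> (\<forall>m\<in>\<rho>`T. Y i m = ?v m)}"
    using the_inv_into_f_f[OF assms(3)] by auto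
  have c: "card (\<rho> ` T) = card T" using card_image[OF assms(3)] .
  show ?thesis unfolding e
    using oa_mono[of N k t Y "\<rho>`T" ?v] assms c the_inv_into_f_f[OF assms(3)] by auto
qed

definition flipU :: "nat set \<Rightarrow> (nat \<Rightarrow> int) \<Rightarrow> nat \<Rightarrow> int" where
  "flipU U w = (\<lambda>m. if m \<in> U then - w m else w m)"

lemma parity:
  fixes F :: "(nat \<Rightarrow> int) \<Rightarrow> rat"
  assumes hyp: "\<And>w j. j \<in> S \<Longrightarrow> (\<forall>m\<in>S. w m \<in> {-1,1}) \<Longrightarrow> F w + F (w(j := - w j)) = M"
  and "finite U" "U \<subseteq> S" "\<forall>m\<in>S. w m \<in> {-1,1}"
  shows "F (flipU U w) = (if even (card U) then F w else M - F w)"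
  using assms(2,3)
proof (induction U rule: finite_induct)
  case empty
  then show ?case by (simp add: flipU_def)
next
  case (insert a U)
  have e: "flipU (insert a U) w = (flipU U w)(a := - flipU U w a)"
    using insert.hyps by (auto simp: flipU_def)
  have pm: "\<forall>m\<in>S. flipU U w m \<in> {-1,1}" using assms(4) by (auto simp: flipU_def)
  have "F (flipU U w) + F (flipU (insert a U) w) = M"
    unfolding e using hyp[of a "flipU U w"] pm insert.prems by auto
  then show ?case using insert by auto
qed




lemma core:
  fixes T :: "nat set"
  assumes oa: "is_OA N k t Y" and ev: "even n" and nt: "n \<le> t" and fin: "finite T"
    and cT: "card T = n" and ck: "c \<le> k" and inj: "inj_on \<rho> T"
    and rho: "\<forall>j\<in>T. \<rho> j \<le> k \<and> \<rho> j \<noteq> c" and u: "\<forall>j\<in>T. u j \<in> {-1,1}"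
  shows "(of_nat (card {i. i<N \<and> (\<forall>j\<in>T. one_col Y i c * one_col Y i (\<rho> j) = u j)}) :: rat)
     = of_nat N / 2 ^ n"
proof -
  have pmY: "\<And>i j. i < N \<Longrightarrow> j < k \<Longrightarrow> Y i j \<in> {-1,1}"
    using oa unfolding is_OA_def pm_array_def by auto
  show ?thesis
  proof (cases "c = 0")
    case True
    have e: "{i. i<N \<and> (\<forall>j\<in>T. one_col Y i c * one_col Y i (\<rho> j) = u j)}
        = {i. i<N \<and> (\<forall>j\<in>T. Y i (\<rho> j - 1) = u j)}"
      using rho True by (auto simp: one_col_def)
    have "inj_on (\<lambda>j. \<rho> j - 1) T"
      using inj rho True by (auto simp: inj_on_def) (metis One_nat_def Suc_pred neq0_conv)
    then show ?thesis unfolding e using oa_inj[OF oa fin, of "\<lambda>j. \<rho> j - 1" u] rho u nt cT True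
      by fastforce
  next
    case c0: False
    show ?thesis
    proof (cases "\<exists>j0\<in>T. \<rho> j0 = 0")
      case True
      then obtain j0 where j0: "j0 \<in> T" "\<rho> j0 = 0" by blast
      let ?r = "\<lambda>j. if j = j0 then c - 1 else \<rho> j - 1"
      let ?u = "\<lambda>j. if j = j0 then u j0 else u j0 * u j"
      have e: "{i. i<N \<and> (\<forall>j\<in>T. one_col Y i c * one_col Y i (\<rho> j) = u j)}
        = {i. i<N \<and> (\<forall>j\<in>T. Y i (?r j) = ?u j)}"
      proof (rule set_eqI, rule iffI)
        fix i assume "i \<in> {i. i<N \<and> (\<forall>j\<in>T. one_col Y i c * one_col Y i (\<rho> j) = u j)}"
        then have i: "i < N" and h: "\<forall>j\<in>T. one_col Y i c * one_col Y i (\<rho> j) = u j" by auto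
        have a: "Y i (c-1) = u j0" using h j0 c0 by (auto simp: one_col_def)
        have "Y i (?r j) = ?u j" if "j \<in> T" for j
        proof (cases "j = j0")
          case False
          then have "\<rho> j \<noteq> 0" using inj j0 that by (metis inj_on_contraD)
          then have "Y i (c-1) * Y i (\<rho> j - 1) = u j" using h that c0 by (auto simp: one_col_def)
          moreover have "\<rho> j - 1 < k" using rho that \<open>\<rho> j \<noteq> 0\<close> by force
          moreover have "Y i (c-1) \<in> {-1,1}" "Y i (\<rho> j - 1) \<in> {-1,1}"
            using pmY i ck c0 \<open>\<rho> j - 1 < k\<close> by auto
          ultimately show ?thesis using arith3[of "Y i (c-1)" "Y i (\<rho> j - 1)" "u j0" "u j"] a False
            by auto
        qed (use a in auto)
        then show "i \<in> {i. i<N \<and> (\<forall>j\<in>T. Y i (?r j) = ?u j)}" using i by auto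
      next
        fix i assume "i \<in> {i. i<N \<and> (\<forall>j\<in>T. Y i (?r j) = ?u j)}"
        then have i: "i < N" and h: "\<forall>j\<in>T. Y i (?r j) = ?u j" by auto
        have a: "Y i (c-1) = u j0" using h j0 by auto
        have "one_col Y i c * one_col Y i (\<rho> j) = u j" if "j \<in> T" for j
        proof (cases "j = j0")
          case False
          then have "\<rho> j \<noteq> 0" using inj j0 that by (metis inj_on_contraD)
          then have "Y i (\<rho> j - 1) = u j0 * u j" using h that False by auto
          moreover have "\<rho> j - 1 < k" using rho that \<open>\<rho> j \<noteq> 0\<close> by force
          moreover have "Y i (c-1) \<in> {-1,1}" "Y i (\<rho> j - 1) \<in> {-1,1}" "u j \<in> {-1,1}"
            using pmY i ck c0 \<open>\<rho> j - 1 < k\<close> u that by auto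
          ultimately show ?thesis using a c0 \<open>\<rho> j \<noteq> 0\<close> by (auto simp: one_col_def)
        qed (use a c0 j0 in \<open>auto simp: one_col_def\<close>)
        then show "i \<in> {i. i<N \<and> (\<forall>j\<in>T. one_col Y i c * one_col Y i (\<rho> j) = u j)}"
          using i by auto
      qed
      have "inj_on ?r T"
      proof (rule inj_onI)
        fix x y assume xy: "x \<in> T" "y \<in> T" "?r x = ?r y"
        show "x = y"
        proof (cases "x = j0 \<or> y = j0")
          case True
          then show ?thesis using xy rho c0 inj j0
            by (metis (no_types, lifting) One_nat_def Suc_pred inj_on_contraD neq0_conv)
        next
          case False
          then have "\<rho> x \<noteq> 0" "\<rho> y \<noteq> 0" using inj j0 xy by (metis inj_on_contraD)+
          then show ?thesis using xy False inj by (auto simp: inj_on_def)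
        qed
      qed
      moreover have "\<forall>j\<in>T. ?r j < k" using rho ck c0 by auto
      moreover have "\<forall>j\<in>T. ?u j \<in> {-1,1}"
      proof
        fix j assume "j \<in> T"
        then have "u j \<in> {-1,1}" "u j0 \<in> {-1,1}" using u j0 by auto
        then show "?u j \<in> {-1,1}" by auto
      qed
      ultimately show ?thesis unfolding e using oa_inj[OF oa fin, of ?r ?u] nt cT by auto
    next
      case False
      then have rne: "\<forall>j\<in>T. \<rho> j \<noteq> 0" by auto
      obtain x where x: "x \<notin> T" using ex_new_if_finite[OF infinite_UNIV_nat fin] by blast
      define S where "S = insert x T"
      let ?r = "\<lambda>j. if j = x then c - 1 else \<rho> j - 1"
      define F where "F = (\<lambda>w. (of_nat (card {i. i<N \<and> (\<forall>j\<in>S. Y i (?r j) = w j)}) :: rat))"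
      have finS: "finite S" and cS: "card S = Suc n" using fin x cT by (auto simp: S_def)
      have injr: "inj_on ?r S"
      proof (rule inj_onI)
        fix a b assume ab: "a \<in> S" "b \<in> S" "?r a = ?r b"
        show "a = b"
        proof (cases "a = x \<or> b = x")
          case True
          then show ?thesis using ab rho c0 rne x unfolding S_def
            by (metis (no_types, lifting) One_nat_def Suc_pred insert_iff neq0_conv)
        next
          case False
          then show ?thesis using ab inj rne unfolding S_def
            by (auto simp: inj_on_def) (metis One_nat_def Suc_pred neq0_conv)
        qed
      qed
      have rk: "\<forall>j\<in>S. ?r j < k" using rho ck c0 rne unfolding S_def by force
      let ?M = "of_nat N / 2 ^ n :: rat"
      have hyp: "F w + F (w(j := - w j)) = ?M" if j: "j \<in> S" and w: "\<forall>m\<in>S. w m \<in> {-1,1}" for w j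
      proof -
        let ?A = "\<lambda>w. {i. i<N \<and> (\<forall>j\<in>S. Y i (?r j) = w j)}"
        have eq: "{i. i<N \<and> (\<forall>m\<in>S-{j}. Y i (?r m) = w m)} = ?A w \<union> ?A (w(j := - w j))"
        proof (rule set_eqI)
          fix i
          show "i \<in> {i. i<N \<and> (\<forall>m\<in>S-{j}. Y i (?r m) = w m)} \<longleftrightarrow> i \<in> ?A w \<union> ?A (w(j := - w j))"
          proof
            assume "i \<in> {i. i<N \<and> (\<forall>m\<in>S-{j}. Y i (?r m) = w m)}"
            then have i: "i < N" and h: "\<forall>m\<in>S-{j}. Y i (?r m) = w m" by auto
            have "Y i (?r j) \<in> {-1,1}" "w j \<in> {-1,1}" using pmY i rk j w by auto
            then have "Y i (?r j) = w j \<or> Y i (?r j) = - w j" by auto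
            then show "i \<in> ?A w \<union> ?A (w(j := - w j))"
            proof
              assume a: "Y i (?r j) = w j"
              have "\<forall>m\<in>S. Y i (?r m) = w m"
              proof
                fix m assume "m \<in> S" then show "Y i (?r m) = w m"
                  using h a by (cases "m = j") (simp_all only: Diff_iff singleton_iff, blast+)
              qed
              then have "i \<in> ?A w" using i by auto
              then show ?thesis by blast
            next
              assume a: "Y i (?r j) = - w j"
              have "\<forall>m\<in>S. Y i (?r m) = (w(j := - w j)) m"
              proof
                fix m assume "m \<in> S" then show "Y i (?r m) = (w(j := - w j)) m"
                  using h a by (cases "m = j") auto
              qed
              then have "i \<in> ?A (w(j := - w j))" using i by auto
              then show ?thesis by blast
            qed
          qed auto
        qed
        have disj: "?A w \<inter> ?A (w(j := - w j)) = {}"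
        proof -
          have "w j \<noteq> - w j" using w j by auto
          then show ?thesis using j by auto
        qed
        have c1: "card (S - {j}) = n" using cS j finS by auto
        have "(of_nat (card {i. i<N \<and> (\<forall>m\<in>S-{j}. Y i (?r m) = w m)}) :: rat) = ?M"
        proof -
          have ij: "inj_on ?r (S - {j})" using injr by (rule inj_on_subset) auto
          have "(of_nat (card {i. i<N \<and> (\<forall>m\<in>S-{j}. Y i (?r m) = w m)}) :: rat) = of_nat N / 2 ^ card (S-{j})"
            by (rule oa_inj[OF oa _ ij]) (use finS rk c1 nt w in auto)
          then show ?thesis by (simp only: c1)
        qed
        moreover have "card {i. i<N \<and> (\<forall>m\<in>S-{j}. Y i (?r m) = w m)} = card (?A w) + card (?A (w(j := - w j)))"
          unfolding eq by (rule card_Un_disjoint) (use disj in auto)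
        ultimately show ?thesis unfolding F_def by simp
      qed
      define w0 where "w0 = u(x := 1)"
      have w0: "\<forall>m\<in>S. w0 m \<in> {-1,1}" using u unfolding w0_def S_def by auto
      have par: "F (flipU S w0) = ?M - F w0"
      proof -
        have "F (flipU S w0) = (if even (card S) then F w0 else ?M - F w0)"
          by (rule parity[of S F ?M S w0, OF hyp]) (use finS w0 in auto)
        then show ?thesis using cS ev by simp
      qed
      have e: "{i. i<N \<and> (\<forall>j\<in>T. one_col Y i c * one_col Y i (\<rho> j) = u j)}
          = {i. i<N \<and> (\<forall>j\<in>S. Y i (?r j) = w0 j)} \<union> {i. i<N \<and> (\<forall>j\<in>S. Y i (?r j) = flipU S w0 j)}"
      proof (rule set_eqI)
        fix i
        have pc: "i < N \<Longrightarrow> Y i (c-1) \<in> {-1,1}" using pmY ck c0 by auto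
        have pr: "i < N \<Longrightarrow> j \<in> T \<Longrightarrow> Y i (\<rho> j - 1) \<in> {-1,1}" for j using pmY rho rne
          by (metis One_nat_def Suc_le_eq Suc_pred bot_nat_0.not_eq_extremum)
        have xT: "\<And>j. j \<in> T \<Longrightarrow> j \<noteq> x" using x by auto
        show "i \<in> {i. i<N \<and> (\<forall>j\<in>T. one_col Y i c * one_col Y i (\<rho> j) = u j)} \<longleftrightarrow>
          i \<in> {i. i<N \<and> (\<forall>j\<in>S. Y i (?r j) = w0 j)} \<union> {i. i<N \<and> (\<forall>j\<in>S. Y i (?r j) = flipU S w0 j)}"
        proof (cases "i < N")
          case True
          note pc' = pc[OF True] and pr' = pr[OF True]
          show ?thesis
          proof (cases "Y i (c-1) = 1")
            case True
            then show ?thesis using c0 rne xT pr' \<open>i<N\<close>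
              by (auto simp: one_col_def S_def w0_def flipU_def)
          next
            case False
            then have m: "Y i (c-1) = -1" using pc' by auto
            have "(\<forall>j\<in>T. - Y i (\<rho> j - 1) = u j) \<longleftrightarrow> (\<forall>j\<in>T. Y i (\<rho> j - 1) = - u j)" by auto
            then show ?thesis using m c0 rne xT pr' \<open>i<N\<close>
              by (auto simp: one_col_def S_def w0_def flipU_def)
          qed
        qed auto
      qed
      have disj: "{i. i<N \<and> (\<forall>j\<in>S. Y i (?r j) = w0 j)} \<inter> {i. i<N \<and> (\<forall>j\<in>S. Y i (?r j) = flipU S w0 j)} = {}"
        unfolding S_def w0_def flipU_def by auto
      have "card {i. i<N \<and> (\<forall>j\<in>T. one_col Y i c * one_col Y i (\<rho> j) = u j)}
          = card {i. i<N \<and> (\<forall>j\<in>S. Y i (?r j) = w0 j)} + card {i. i<N \<and> (\<forall>j\<in>S. Y i (?r j) = flipU S w0 j)}"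
        unfolding e by (rule card_Un_disjoint) (use disj in auto)
      then show ?thesis using par unfolding F_def by simp
    qed
  qed
qed




lemma mul_pm: "(a::int) \<in> {-1,1} \<Longrightarrow> b \<in> {-1,1} \<Longrightarrow> a * b \<in> {-1,1}"
  by (cases "a = 1"; cases "b = 1") auto

lemma perm_of_inj:
  fixes f :: "nat \<Rightarrow> nat"
  assumes "inj_on f {..<n}" "\<forall>j<n. f j < n" "\<forall>j. j \<ge> n \<longrightarrow> f j = j"
  shows "f permutes {..<n}"
proof (rule bij_imp_permutes)
  have "f ` {..<n} \<subseteq> {..<n}" using assms(2) by auto
  then have "f ` {..<n} = {..<n}" using endo_inj_surj[OF finite_lessThan _ assms(1)] by blast
  then show "bij_betw f {..<n} {..<n}" using assms(1) by (simp add: bij_betw_def)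
  show "\<And>x. x \<notin> {..<n} \<Longrightarrow> f x = x" using assms(3) by auto
qed

lemma G_OD_comp: "G_OD k g1 \<Longrightarrow> G_OD k g2 \<Longrightarrow> G_OD k (g1 \<circ> g2)"
proof (induction rule: G_OD.induct)
  case G_OD_id
  then show ?case by simp
next
  case (G_OD_step h g)
  have "G_OD k (h \<circ> (g \<circ> g2))" by (rule G_OD.G_OD_step[OF G_OD_step(1) G_OD_step(3)[OF G_OD_step(4)]])
  then show ?case by (simp only: comp_assoc)
qed

lemma G_OD_gen: "OD_gen k h \<Longrightarrow> G_OD k h"
  using G_OD_step[OF _ G_OD_id] by simp

lemma sign_G:
  assumes "F \<subseteq> {..<k}"
  shows "\<exists>g. G_OD k g \<and> (\<forall>z. length z = k \<longrightarrow> g z = map (\<lambda>j. if j \<in> F then - z!j else z!j) [0..<k])"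
proof -
  have "finite F" using assms finite_subset by blast
  then show ?thesis using assms
  proof (induction F rule: finite_induct)
    case empty
    show ?case
    proof (rule exI[of _ id], intro conjI allI impI)
      show "G_OD k id" by (rule G_OD_id)
    qed (clarsimp, rule nth_equalityI, auto)
  next
    case (insert a F)
    then obtain g where g: "G_OD k g" "\<forall>z. length z = k \<longrightarrow> g z = map (\<lambda>j. if j \<in> F then - z!j else z!j) [0..<k]"
      by auto
    have a: "a < k" using insert by auto
    show ?case
    proof (rule exI[of _ "sign_change a \<circ> g"], intro conjI allI impI)
      show "G_OD k (sign_change a \<circ> g)" using g(1) a by (intro G_OD_step OD_gen.intros)
      fix z :: "int list" assume z: "length z = k"
      show "(sign_change a \<circ> g) z = map (\<lambda>j. if j \<in> insert a F then - z!j else z!j) [0..<k]"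
      proof -
        have gz: "g z = map (\<lambda>j. if j \<in> F then - z!j else z!j) [0..<k]" using g(2) z by blast
        show ?thesis unfolding comp_def sign_change_def gz
        proof (rule nth_equalityI)
          fix j assume "j < length ((map (\<lambda>j. if j \<in> F then - z!j else z!j) [0..<k])
              [a := - map (\<lambda>j. if j \<in> F then - z!j else z!j) [0..<k] ! a])"
          then show "(map (\<lambda>j. if j \<in> F then - z!j else z!j) [0..<k])
              [a := - map (\<lambda>j. if j \<in> F then - z!j else z!j) [0..<k] ! a] ! j =
            map (\<lambda>j. if j \<in> insert a F then - z!j else z!j) [0..<k] ! j"
            using a insert.hyps(2) by (cases "j = a") (auto simp: nth_list_update)
        qed simp
      qed
    qed
  qed
qed

definition pml :: "nat \<Rightarrow> int list \<Rightarrow> bool" where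
  "pml k z \<longleftrightarrow> length z = k \<and> set z \<subseteq> {-1,1}"

definition gdata :: "nat \<Rightarrow> (int list \<Rightarrow> int list) \<Rightarrow> bool" where
  "gdata k g \<longleftrightarrow> (\<exists>\<tau> (d2::nat \<Rightarrow> int) (e::int list \<Rightarrow> int). \<tau> permutes {..<Suc k} \<and> (\<forall>j<Suc k. d2 j \<in> {-1,1}) \<and>
     (\<forall>z. pml k z \<longrightarrow> pml k (g z) \<and> e z \<in> {-1,1} \<and>
        (\<forall>j<Suc k. (1 # g z) ! j = e z * d2 j * (1 # z) ! (\<tau> j))))"

lemma gdata_comp:
  assumes "gdata k h" "gdata k g" shows "gdata k (h \<circ> g)"
proof -
  obtain \<tau>h d2h eh where h: "\<tau>h permutes {..<Suc k}" "\<forall>j<Suc k. d2h j \<in> {-1,1::int}"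
     "\<forall>z. pml k z \<longrightarrow> pml k (h z) \<and> eh z \<in> {-1,1::int} \<and>
        (\<forall>j<Suc k. (1 # h z) ! j = eh z * d2h j * (1 # z) ! (\<tau>h j))"
    using assms(1) unfolding gdata_def by blast
  obtain \<tau>g d2g eg where g: "\<tau>g permutes {..<Suc k}" "\<forall>j<Suc k. d2g j \<in> {-1,1::int}"
     "\<forall>z. pml k z \<longrightarrow> pml k (g z) \<and> eg z \<in> {-1,1::int} \<and>
        (\<forall>j<Suc k. (1 # g z) ! j = eg z * d2g j * (1 # z) ! (\<tau>g j))"
    using assms(2) unfolding gdata_def by blast
  have th: "\<tau>h j < Suc k" if "j < Suc k" for j using permutes_in_image[OF h(1)] that by auto
  show ?thesis unfolding gdata_def
  proof (intro exI conjI allI impI)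
    show "\<tau>g \<circ> \<tau>h permutes {..<Suc k}" by (rule permutes_compose[OF h(1) g(1)])
    fix j assume j: "j < Suc k"
    show "d2h j * d2g (\<tau>h j) \<in> {-1,1}" using h(2) g(2) th[OF j] j by (intro mul_pm) auto
  next
    fix z assume z: "pml k z"
    show "pml k ((h \<circ> g) z)" using h(3) g(3) z by auto
    show "eh (g z) * eg z \<in> {-1,1}" using h(3) g(3) z by (intro mul_pm) auto
    fix j assume j: "j < Suc k"
    have "(1 # (h \<circ> g) z) ! j = eh (g z) * d2h j * (1 # g z) ! (\<tau>h j)" using h(3) g(3) z j by auto
    also have "\<dots> = eh (g z) * d2h j * (eg z * d2g (\<tau>h j) * (1 # z) ! (\<tau>g (\<tau>h j)))"
      using g(3) z th[OF j] by auto
    finally show "(1 # (h \<circ> g) z) ! j = eh (g z) * eg z * (d2h j * d2g (\<tau>h j)) * (1 # z) ! ((\<tau>g \<circ> \<tau>h) j)"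
      by (simp add: algebra_simps)
  qed
qed

lemma gdata_gen:
  assumes "OD_gen k h" shows "gdata k h"
  using assms
proof cases
  case (1 \<pi>)
  let ?t = "\<lambda>j. if j = 0 then 0 else Suc (\<pi> (j - 1))"
  have pin: "\<pi> m < k" if "m < k" for m using permutes_in_image[OF 1(2)] that by auto
  have tp: "?t permutes {..<Suc k}"
  proof (rule perm_of_inj)
    show "inj_on ?t {..<Suc k}" using permutes_inj[OF 1(2)]
      by (auto simp: inj_on_def inj_def) (metis Suc_pred neq0_conv)
    show "\<forall>j<Suc k. ?t j < Suc k" using pin by auto
    show "\<forall>j. j \<ge> Suc k \<longrightarrow> ?t j = j" using permutes_not_in[OF 1(2)] by auto
  qed
  show ?thesis unfolding gdata_def 1(1)
  proof (intro exI[of _ ?t] exI[of _ "\<lambda>_. 1"] exI[of _ "\<lambda>_. 1"] conjI allI impI tp)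
    fix z assume z: "pml k z"
    show "pml k (coord_perm k \<pi> z)" unfolding pml_def
    proof
      show "length (coord_perm k \<pi> z) = k" by (simp add: coord_perm_def)
      show "set (coord_perm k \<pi> z) \<subseteq> {-1,1}"
      proof
        fix x assume "x \<in> set (coord_perm k \<pi> z)"
        then obtain m where m: "m < k" "x = z ! \<pi> m" by (auto simp: coord_perm_def)
        then have "x \<in> set z" using pin z by (auto simp: pml_def)
        then show "x \<in> {-1,1}" using z by (auto simp: pml_def)
      qed
    qed
    fix j assume j: "j < Suc k"
    show "(1 # coord_perm k \<pi> z) ! j = 1 * 1 * (1 # z) ! (?t j)"
      using j by (cases j) (auto simp: coord_perm_def)
  qed auto
next
  case (2 i)
  let ?d = "\<lambda>j. if j = Suc i then -1 else 1 :: int"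
  show ?thesis unfolding gdata_def 2(1)
  proof (intro exI[of _ id] exI[of _ ?d] exI[of _ "\<lambda>_. 1"] conjI allI impI)
    fix z assume z: "pml k z"
    have zi: "z ! i \<in> set z" by (rule nth_mem) (use z 2 in \<open>auto simp: pml_def\<close>)
    then have "- z ! i \<in> {-1,1}" using z by (auto simp: pml_def)
    moreover have "set (z[i := - z ! i]) \<subseteq> insert (- z ! i) (set z)" by (rule set_update_subset_insert)
    ultimately show "pml k (sign_change i z)" using z
      unfolding pml_def sign_change_def by auto
    fix j assume j: "j < Suc k"
    show "(1 # sign_change i z) ! j = 1 * ?d j * (1 # z) ! (id j)"
      using j z 2 by (cases j) (auto simp: sign_change_def pml_def nth_list_update)
  qed (auto simp: permutes_id)
next
  case (3 i)
  let ?t = "Transposition.transpose 0 (Suc i)"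
  have zz: "z ! i * z ! i = 1" if "pml k z" for z
  proof -
    have "z ! i \<in> set z" using that 3(2) by (auto simp: pml_def)
    then have "z ! i \<in> {-1,1}" using that by (auto simp: pml_def)
    then show ?thesis by auto
  qed
  have tp: "?t permutes {..<Suc k}" using 3(2) by (intro permutes_swap_id) auto
  show ?thesis unfolding gdata_def 3(1)
  proof (rule exI[of _ ?t], rule exI[of _ "\<lambda>_. 1"], rule exI[of _ "\<lambda>z. z ! i"], intro conjI allI impI tp)
    fix z assume z: "pml k z"
    have "z ! i \<in> set z" by (rule nth_mem) (use z 3(2) in \<open>simp add: pml_def\<close>)
    then have zi: "z ! i \<in> {-1,1}" using z by (auto simp: pml_def)
    show "z ! i \<in> {-1,1}" by fact
    have "z ! j * z ! i \<in> {-1,1}" if "j < k" for j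
    proof -
      have "z ! j \<in> set z" by (rule nth_mem) (use z that in \<open>simp add: pml_def\<close>)
      then have "z ! j \<in> {-1,1}" using z by (auto simp: pml_def)
      then show ?thesis using zi by (rule mul_pm)
    qed
    then show "pml k (R_map k i z)" unfolding pml_def
    proof (intro conjI)
      show "length (R_map k i z) = k" by (simp add: R_map_def)
    next
      assume h: "\<And>j. j < k \<Longrightarrow> z ! j * z ! i \<in> {-1,1}"
      show "set (R_map k i z) \<subseteq> {-1,1}"
      proof
        fix x assume "x \<in> set (R_map k i z)"
        then obtain j where "j < k" "x = (if j = i then z ! i else z ! j * z ! i)"
          by (auto simp: R_map_def)
        then show "x \<in> {-1,1}" using h zi by (cases "j = i") auto
      qed
    qed
    fix j assume j: "j < Suc k"
    show "(1 # R_map k i z) ! j = z ! i * 1 * (1 # z) ! (?t j)"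
    proof (cases j)
      case 0
      then show ?thesis using zz[OF z] by simp
    next
      case (Suc m)
      have mk: "m < k" using j Suc by simp
      have l: "(1 # R_map k i z) ! j = (if m = i then z ! i else z ! m * z ! i)"
        using Suc mk by (simp add: R_map_def)
      show ?thesis
      proof (cases "m = i")
        case True
        then show ?thesis using l Suc by simp
      next
        case False
        then have "?t j = j" using Suc by (simp add: transpose_apply_other)
        then show ?thesis using l Suc False by simp
      qed
    qed
  qed auto
qed

lemma G_gdata: "G_OD k g \<Longrightarrow> gdata k g"
proof (induction rule: G_OD.induct)
  case G_OD_id
  show ?case unfolding gdata_def
    by (intro exI[of _ id] exI[of _ "\<lambda>_. 1"] exI[of _ "\<lambda>_. 1"]) (auto simp: permutes_id)
next
  case (G_OD_step h g)
  then show ?case using gdata_comp gdata_gen by blast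
qed




lemma oc_row: "j < Suc k \<Longrightarrow> one_col A i j = (1 # arr_row k A i) ! j"
  by (cases j) (auto simp: one_col_def arr_row_def)

lemma pm_oc: "pm_array N k A \<Longrightarrow> i < N \<Longrightarrow> j < Suc k \<Longrightarrow> one_col A i j \<in> {-1,1}"
  by (cases j) (auto simp: one_col_def pm_array_def)

lemma pml_row:
  assumes "pm_array N k A" "i < N" shows "pml k (arr_row k A i)"
proof -
  have that: "A i j \<in> {-1,1}" if "j < k" for j using assms that unfolding pm_array_def by blast
  show ?thesis unfolding pml_def arr_row_def by (simp add: image_subset_iff) (use that in auto)
qed

lemma arith4:
  fixes d p b q r v x :: int
  assumes "d \<in> {-1,1}" "p \<in> {-1,1}" "b \<in> {-1,1}" "q \<in> {-1,1}" "r \<in> {-1,1}" "v \<in> {-1,1}"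
    "d*p*b = 1" "x = d*q*r"
  shows "x = v \<longleftrightarrow> b*r = v*p*q"
  using assms by (cases "d=1"; cases "p=1"; cases "b=1"; cases "q=1"; cases "r=1"; cases "v = 1") auto

lemma od_data:
  assumes "OD_equiv N k X Y"
  obtains \<sigma> \<tau> d1 d2 where "\<sigma> permutes {..<N}" "\<tau> permutes {..<Suc k}"
    "\<forall>i<N. d1 i \<in> {-1, 1::int}" "\<forall>j<Suc k. d2 j \<in> {-1, 1::int}"
    "\<forall>i<N. \<forall>j<Suc k. one_col X i j = d1 i * d2 j * one_col Y (\<sigma> i) (\<tau> j)"
proof -
  have "hadamard_equiv N (Suc k) (one_col Y) (one_col X)"
    using assms by (auto simp: OD_equiv_def intro: had_sym)
  then show ?thesis using that unfolding hadamard_equiv_def by blast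
qed

lemma part_oa:
  assumes oa: "is_OA N k t Y" and pmX: "pm_array N k X" and od: "OD_equiv N k X Y"
  shows "is_OA N k (2 * (t div 2)) X"
proof -
  obtain \<sigma> \<tau> d1 d2 where s: "\<sigma> permutes {..<N}" "\<tau> permutes {..<Suc k}"
    "\<forall>i<N. d1 i \<in> {-1, 1::int}" "\<forall>j<Suc k. d2 j \<in> {-1, 1::int}"
    and h: "\<forall>i<N. \<forall>j<Suc k. one_col X i j = d1 i * d2 j * one_col Y (\<sigma> i) (\<tau> j)"
    using od_data[OF od] by blast
  have pmY: "pm_array N k Y" and tk: "t \<le> k" using oa by (auto simp: is_OA_def)
  let ?n = "2 * (t div 2)"
  have nt: "?n \<le> t" by simp
  have tl: "\<And>j. j < Suc k \<Longrightarrow> \<tau> j < Suc k" using permutes_in_image[OF s(2)] by auto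
  have tinj: "\<And>a b. \<tau> a = \<tau> b \<longleftrightarrow> a = b" using permutes_inj[OF s(2)] by (auto simp: inj_eq)
  have sl: "\<And>i. i < N \<Longrightarrow> \<sigma> i < N" using permutes_in_image[OF s(1)] by auto
  show ?thesis unfolding is_OA_def
  proof (intro conjI allI impI pmX)
    show "?n \<le> k" using nt tk by linarith
    fix T :: "nat set" and v :: "nat \<Rightarrow> int" assume T: "T \<subseteq> {..<k}" and cT: "card T = ?n" and v: "v ` T \<subseteq> {-1,1}"
    define u where "u = (\<lambda>j. v j * d2 0 * d2 (Suc j))"
    define P where "P = (\<lambda>i'. \<forall>j\<in>T. one_col Y i' (\<tau> 0) * one_col Y i' (\<tau> (Suc j)) = u j)"
    have e: "{i. i<N \<and> (\<forall>j\<in>T. X i j = v j)} = {i. i<N \<and> P (\<sigma> i)}"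
    proof (rule Collect_cong, rule conj_cong[OF refl], unfold P_def, rule ball_cong[OF refl])
      fix i j assume i: "i < N" and j: "j \<in> T"
      have jk: "j < k" using j T by auto
      have h0: "one_col X i 0 = d1 i * d2 0 * one_col Y (\<sigma> i) (\<tau> 0)" using h i by auto
      have "one_col X i (Suc j) = d1 i * d2 (Suc j) * one_col Y (\<sigma> i) (\<tau> (Suc j))"
        using h i jk by blast
      then have h1: "X i j = d1 i * d2 (Suc j) * one_col Y (\<sigma> i) (\<tau> (Suc j))"
        by (simp add: one_col_def[of X])
      show "X i j = v j \<longleftrightarrow> one_col Y (\<sigma> i) (\<tau> 0) * one_col Y (\<sigma> i) (\<tau> (Suc j)) = u j"
        unfolding u_def
      proof (rule arith4)
        show "d1 i \<in> {-1,1}" using s(3) i by auto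
        show "d2 0 \<in> {-1,1}" using s(4) by auto
        show "d2 (Suc j) \<in> {-1,1}" using s(4) jk by auto
        show "one_col Y (\<sigma> i) (\<tau> 0) \<in> {-1,1}" using pm_oc[OF pmY sl[OF i] tl[of 0]] by auto
        show "one_col Y (\<sigma> i) (\<tau> (Suc j)) \<in> {-1,1}" using pm_oc[OF pmY sl[OF i] tl[of "Suc j"]] jk by auto
        show "v j \<in> {-1,1}" using v j by auto
        show "d1 i * d2 0 * one_col Y (\<sigma> i) (\<tau> 0) = 1" using h0 by (simp add: one_col_def)
        show "X i j = d1 i * d2 (Suc j) * one_col Y (\<sigma> i) (\<tau> (Suc j))" by (rule h1)
      qed
    qed
    have "(of_nat (card {i. i<N \<and> P i}) :: rat) = of_nat N / 2 ^ ?n"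
      unfolding P_def
    proof (rule core[OF oa])
      show "even ?n" by simp
      show "?n \<le> t" by simp
      show "finite T" using T finite_subset by blast
      show "card T = ?n" by (rule cT)
      show "\<tau> 0 \<le> k" using tl[of 0] by simp
      show "inj_on (\<lambda>j. \<tau> (Suc j)) T" by (auto simp: inj_on_def tinj)
      show "\<forall>j\<in>T. \<tau> (Suc j) \<le> k \<and> \<tau> (Suc j) \<noteq> \<tau> 0"
        using tl T by (auto simp: tinj less_Suc_eq_le)
      show "\<forall>j\<in>T. u j \<in> {-1,1}"
      proof
        fix j assume j: "j \<in> T"
        then have jk: "Suc j < Suc k" using T by auto
        have "v j \<in> {-1,1}" "d2 0 \<in> {-1,1}" "d2 (Suc j) \<in> {-1,1}" using v j s(4) jk by auto
        then show "u j \<in> {-1,1}" unfolding u_def by (intro mul_pm)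
      qed
    qed
    then show "(of_nat (card {i. i<N \<and> (\<forall>j\<in>T. X i j = v j)}) :: rat) = of_nat N / 2 ^ ?n"
      unfolding e card_perm[OF s(1), of P] .
  qed
qed




lemma part_bwd:
  assumes pmY: "pm_array N k Y" and G: "G_OD k g" and m: "rows_mset N k X = rows_mset_act N k g Y"
  shows "OD_equiv N k X Y"
proof -
  have "mset (map (arr_row k X) [0..<N]) = mset (map (\<lambda>i. g (arr_row k Y i)) [0..<N])"
    using m by (simp add: rows_mset_def rows_mset_act_def)
  then obtain p where p: "p permutes {..<length (map (\<lambda>i. g (arr_row k Y i)) [0..<N])}"
    "permute_list p (map (\<lambda>i. g (arr_row k Y i)) [0..<N]) = map (arr_row k X) [0..<N]"
    by (rule mset_eq_permutation)
  have pp: "p permutes {..<N}" using p(1) by simp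
  have pl: "\<And>i. i < N \<Longrightarrow> p i < N" using permutes_in_image[OF pp] by auto
  have rowp: "arr_row k X i = g (arr_row k Y (p i))" if i: "i < N" for i
  proof -
    have "arr_row k X i = map (arr_row k X) [0..<N] ! i" using i by simp
    also have "\<dots> = permute_list p (map (\<lambda>i. g (arr_row k Y i)) [0..<N]) ! i" using p(2) by simp
    also have "\<dots> = (map (\<lambda>i. g (arr_row k Y i)) [0..<N]) ! (p i)"
      by (rule permute_list_nth) (use p(1) i in auto)
    also have "\<dots> = g (arr_row k Y (p i))" using pl[OF i] by simp
    finally show ?thesis .
  qed
  obtain \<tau> d2 e where d: "\<tau> permutes {..<Suc k}" "\<forall>j<Suc k. d2 j \<in> {-1,1::int}"
     "\<forall>z. pml k z \<longrightarrow> pml k (g z) \<and> e z \<in> {-1,1::int} \<and>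
        (\<forall>j<Suc k. (1 # g z) ! j = e z * d2 j * (1 # z) ! (\<tau> j))"
    using G_gdata[OF G] unfolding gdata_def by blast
  have tl: "\<And>j. j < Suc k \<Longrightarrow> \<tau> j < Suc k" using permutes_in_image[OF d(1)] by auto
  have "hadamard_equiv N (Suc k) (one_col Y) (one_col X)"
    unfolding hadamard_equiv_def
  proof (intro exI conjI allI impI)
    show "p permutes {..<N}" by (rule pp)
    show "\<tau> permutes {..<Suc k}" by (rule d(1))
    fix i assume i: "i < N"
    have z: "pml k (arr_row k Y (p i))" by (rule pml_row[OF pmY pl[OF i]])
    show "e (arr_row k Y (p i)) \<in> {-1,1}" using d(3) z by blast
    fix j assume j: "j < Suc k"
    have "one_col X i j = (1 # arr_row k X i) ! j" by (rule oc_row[OF j])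
    also have "\<dots> = (1 # g (arr_row k Y (p i))) ! j" using rowp[OF i] by simp
    also have "\<dots> = e (arr_row k Y (p i)) * d2 j * (1 # arr_row k Y (p i)) ! (\<tau> j)"
      using d(3) z j by blast
    also have "\<dots> = e (arr_row k Y (p i)) * d2 j * one_col Y (p i) (\<tau> j)"
      using oc_row[OF tl[OF j], of Y "p i"] by simp
    finally show "one_col X i j = e (arr_row k Y (p i)) * d2 j * one_col Y (p i) (\<tau> j)" .
  next
    fix j assume "j < Suc k" then show "d2 j \<in> {-1,1}" using d(2) by blast
  qed
  then show ?thesis unfolding OD_equiv_def by (rule had_sym)
qed

lemma part_fwd:
  assumes pmY: "pm_array N k Y" and od: "OD_equiv N k X Y"
  shows "\<exists>g. G_OD k g \<and> rows_mset N k X = rows_mset_act N k g Y"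
proof -
  obtain \<sigma> \<tau> d1 d2 where s: "\<sigma> permutes {..<N}" "\<tau> permutes {..<Suc k}"
    "\<forall>i<N. d1 i \<in> {-1, 1::int}" "\<forall>j<Suc k. d2 j \<in> {-1, 1::int}"
    and h: "\<forall>i<N. \<forall>j<Suc k. one_col X i j = d1 i * d2 j * one_col Y (\<sigma> i) (\<tau> j)"
    using od_data[OF od] by blast
  have tl: "\<And>j. j < Suc k \<Longrightarrow> \<tau> j < Suc k" using permutes_in_image[OF s(2)] by auto
  have tinj: "\<And>a b. \<tau> a = \<tau> b \<longleftrightarrow> a = b" using permutes_inj[OF s(2)] by (auto simp: inj_eq)
  have sl: "\<And>i. i < N \<Longrightarrow> \<sigma> i < N" using permutes_in_image[OF s(1)] by auto
  define c where "c = \<tau> 0"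
  have ck: "c \<le> k" using tl[of 0] by (simp add: c_def)
  define \<pi> where "\<pi> = (\<lambda>j. if j < k then (if \<tau> (Suc j) = 0 then c - 1 else \<tau> (Suc j) - 1) else j)"
  have pik: "\<pi> j < k" if "j < k" for j
  proof -
    have "\<tau> (Suc j) < Suc k" using tl that by simp
    then show ?thesis using that ck by (auto simp: \<pi>_def)
  qed
  have pp: "\<pi> permutes {..<k}"
  proof (rule perm_of_inj)
    show "inj_on \<pi> {..<k}"
    proof (rule inj_onI)
      fix a b assume a: "a \<in> {..<k}" and b: "b \<in> {..<k}" and e: "\<pi> a = \<pi> b"
      show "a = b"
      proof (cases "\<tau> (Suc a) = 0"; cases "\<tau> (Suc b) = 0")
        assume "\<tau> (Suc a) = 0" "\<tau> (Suc b) = 0"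
        then show ?thesis using tinj by (metis Suc_inject)
      next
        assume 1: "\<tau> (Suc a) = 0" "\<tau> (Suc b) \<noteq> 0"
        then have "c \<noteq> 0" using tinj unfolding c_def by (metis nat.distinct(1))
        moreover have "c - 1 = \<tau> (Suc b) - 1" using e a b 1 by (simp add: \<pi>_def)
        ultimately have "\<tau> 0 = \<tau> (Suc b)" using 1 unfolding c_def by linarith
        then show ?thesis using tinj by simp
      next
        assume 1: "\<tau> (Suc a) \<noteq> 0" "\<tau> (Suc b) = 0"
        then have "c \<noteq> 0" using tinj unfolding c_def by (metis nat.distinct(1))
        moreover have "\<tau> (Suc a) - 1 = c - 1" using e a b 1 by (simp add: \<pi>_def)
        ultimately have "\<tau> 0 = \<tau> (Suc a)" using 1 unfolding c_def by linarith
        then show ?thesis using tinj by simp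
      next
        assume 1: "\<tau> (Suc a) \<noteq> 0" "\<tau> (Suc b) \<noteq> 0"
        then have "\<tau> (Suc a) - 1 = \<tau> (Suc b) - 1" using e a b by (simp add: \<pi>_def)
        then have "\<tau> (Suc a) = \<tau> (Suc b)" using 1 by linarith
        then show ?thesis using tinj by simp
      qed
    qed
    show "\<forall>j<k. \<pi> j < k" using pik by blast
    show "\<forall>j. j \<ge> k \<longrightarrow> \<pi> j = j" by (simp add: \<pi>_def)
  qed
  define e where "e = (\<lambda>j. d2 0 * d2 (Suc j))"
  obtain sg where sg: "G_OD k sg"
    "\<forall>z. length z = k \<longrightarrow> sg z = map (\<lambda>j. if j \<in> {j. j < k \<and> e j = -1} then - z!j else z!j) [0..<k]"
    using sign_G[of "{j. j < k \<and> e j = -1}" k] by auto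
  define pre where "pre = (if c = 0 then id else R_map k (c - 1))"
  have Gpre: "G_OD k pre"
  proof (cases "c = 0")
    case True then show ?thesis by (simp add: pre_def G_OD_id)
  next
    case False
    then have "c - 1 < k" using ck by simp
    then show ?thesis using False by (simp add: pre_def G_OD_gen OD_gen.intros(3))
  qed
  define g where "g = sg \<circ> (coord_perm k \<pi> \<circ> pre)"
  have Gg: "G_OD k g" unfolding g_def
    by (rule G_OD_comp[OF sg(1) G_OD_comp[OF G_OD_gen[OF OD_gen.intros(1)[OF pp]] Gpre]])
  have rows: "arr_row k X i = g (arr_row k Y (\<sigma> i))" if i: "i < N" for i
  proof -
    define z where "z = arr_row k Y (\<sigma> i)"
    let ?oY = "one_col Y (\<sigma> i)"
    have lz: "length z = k" by (simp add: z_def arr_row_def)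
    have zn: "\<And>m. m < k \<Longrightarrow> z ! m = ?oY (Suc m)" by (simp add: z_def arr_row_def one_col_def)
    have lpre: "length (pre z) = k" using lz by (simp add: pre_def R_map_def)
    have lcp: "length (coord_perm k \<pi> (pre z)) = k" by (simp add: coord_perm_def)
    have key: "pre z ! \<pi> j = ?oY c * ?oY (\<tau> (Suc j))" if j: "j < k" for j
    proof -
      have ts: "\<tau> (Suc j) < Suc k" using tl j by simp
      have tsc: "\<tau> (Suc j) \<noteq> c" using tinj unfolding c_def by simp
      show ?thesis
      proof (cases "c = 0")
        case True
        then have "\<tau> (Suc j) \<noteq> 0" using tsc by simp
        then have "\<pi> j = \<tau> (Suc j) - 1" using j by (simp add: \<pi>_def)
        moreover have "?oY c = 1" using True by (simp add: one_col_def)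
        ultimately show ?thesis using True zn[of "\<tau> (Suc j) - 1"] ts \<open>\<tau> (Suc j) \<noteq> 0\<close>
          by (simp add: pre_def)
      next
        case False
        have R: "pre z ! m = (if m = c - 1 then z ! (c - 1) else z ! m * z ! (c - 1))" if "m < k" for m
          using False that by (simp add: pre_def R_map_def)
        have zc: "z ! (c - 1) = ?oY c" using zn[of "c - 1"] False ck by simp
        show ?thesis
        proof (cases "\<tau> (Suc j) = 0")
          case True
          then have "\<pi> j = c - 1" using j by (simp add: \<pi>_def)
          then show ?thesis using R[of "c - 1"] zc True False ck by (simp add: one_col_def)
        next
          case t0: False
          then have pj: "\<pi> j = \<tau> (Suc j) - 1" using j by (simp add: \<pi>_def)
          have "\<pi> j \<noteq> c - 1" using pj t0 False tsc by linarith
          moreover have "z ! (\<pi> j) = ?oY (\<tau> (Suc j))" using zn[of "\<pi> j"] pik[OF j] pj t0 by simp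
          ultimately show ?thesis using R[OF pik[OF j]] zc by (simp add: mult.commute)
        qed
      qed
    qed
    have gz: "g z = map (\<lambda>j. if j \<in> {j. j < k \<and> e j = -1} then - (coord_perm k \<pi> (pre z))!j
        else (coord_perm k \<pi> (pre z))!j) [0..<k]"
      using sg(2) lcp by (simp add: g_def)
    show ?thesis unfolding z_def[symmetric]
    proof (rule nth_equalityI)
      show "length (arr_row k X i) = length (g z)" by (simp add: gz arr_row_def)
      fix j assume "j < length (arr_row k X i)"
      then have j: "j < k" by (simp add: arr_row_def)
      have cp: "coord_perm k \<pi> (pre z) ! j = pre z ! \<pi> j" using j by (simp add: coord_perm_def)
      have h0: "one_col X i 0 = d1 i * d2 0 * ?oY (\<tau> 0)" using h i by auto
      have "one_col X i (Suc j) = d1 i * d2 (Suc j) * ?oY (\<tau> (Suc j))" using h i j by blast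
      then have h1: "X i j = d1 i * d2 (Suc j) * ?oY (\<tau> (Suc j))" by (simp add: one_col_def[of X])
      have "X i j = d2 0 * d2 (Suc j) * (?oY c * ?oY (\<tau> (Suc j)))"
        unfolding h1
      proof (rule arith1)
        show "d1 i \<in> {-1,1}" using s(3) i by auto
        show "d2 0 \<in> {-1,1}" using s(4) by auto
        show "d2 (Suc j) \<in> {-1,1}" using s(4) j by auto
        show "?oY c \<in> {-1,1}" using pm_oc[OF pmY sl[OF i], of c] ck by auto
        show "?oY (\<tau> (Suc j)) \<in> {-1,1}" using pm_oc[OF pmY sl[OF i] tl[of "Suc j"]] j by auto
        show "d1 i * d2 0 * ?oY c = 1" using h0 by (simp add: one_col_def c_def)
      qed
      then have "X i j = e j * pre z ! \<pi> j" using key[OF j] by (simp add: e_def)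
      moreover have "e j \<in> {-1,1}" using s(4) j unfolding e_def by (intro mul_pm) auto
      ultimately show "arr_row k X i ! j = g z ! j"
        using j by (auto simp: gz cp arr_row_def)
    qed
  qed
  have "rows_mset N k X = mset (map (\<lambda>i. g (arr_row k Y (\<sigma> i))) [0..<N])"
    unfolding rows_mset_def using rows by (intro arg_cong[where f=mset] map_cong) auto
  also have "\<dots> = rows_mset_act N k g Y"
    unfolding rows_mset_act_def by (rule mset_perm[OF s(1)])
  finally show ?thesis using Gg by blast
qed

theorem theorem6:
  fixes N k t :: nat and X Y :: "nat \<Rightarrow> nat \<Rightarrow> int"
  assumes "is_OA N k t Y" and "t \<ge> 1" and "pm_array N k X"
  shows "(OD_equiv N k X Y \<longleftrightarrow> (\<exists>g. G_OD k g \<and> rows_mset N k X = rows_mset_act N k g Y))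
     \<and> (OD_equiv N k X Y \<longrightarrow> is_OA N k (2 * (t div 2)) X)"
proof -
  have pmY: "pm_array N k Y" using assms(1) by (simp add: is_OA_def)
  show ?thesis
    using part_fwd[OF pmY] part_bwd[OF pmY] part_oa[OF assms(1) assms(3)] by blast
qed


end
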